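(* Let $S\subseteq\mathbb{N}^d$ be a Frobenius GNS with Frobenius gap $F(S)$. Then $$\frac{g(S)}{\|F(S)\|-g(S)}\le t(S).$$
   Context: $\mathbb{N}=\{0,1,2,\dots\}$. A GNS is a submonoid $S\subseteq\mathbb{N}^d$ with finite complement $\mathcal{H}(S)=\mathbb{N}^d\setminus S$ (gaps); $g(S)=|\mathcal{H}(S)|$. A Frobenius GNS is a GNS such that $\mathcal{H}(S)$ has a unique maximal element $F(S)$ for the natural partial order ($x\le y$ iff $x^{(i)}\le y^{(i)}$ for all $i$). A gap $P$ is pseudo-Frobenius if $P+s\in S$ for all nonzero $s\in S$; $t(S)$ is the number of pseudo-Frobenius gaps. For $F\in\mathbb{N}^d$, $\|F\|=\prod_{i=1}^d(F^{(i)}+1)$. *)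

theory Defs
  imports Complex_Main "HOL-Library.Function_Algebras"
begin

text \<open>Points of N^d are functions 'd \<Rightarrow> nat with 'd a finite index type
  (CARD('d) = d). Addition is pointwise (Function_Algebras) and the order
  le_fun is the natural componentwise partial order.\<close>

definition GNS :: "('d::finite \<Rightarrow> nat) set \<Rightarrow> bool" where
  "GNS S \<longleftrightarrow> 0 \<in> S \<and> (\<forall>x\<in>S. \<forall>y\<in>S. x + y \<in> S) \<and> finite (UNIV - S)"

definition gaps :: "('d::finite \<Rightarrow> nat) set \<Rightarrow> ('d \<Rightarrow> nat) set" where
  "gaps S = UNIV - S"

definition genus :: "('d::finite \<Rightarrow> nat) set \<Rightarrow> nat" where
  "genus S = card (gaps S)"

definition maximal_gaps :: "('d::finite \<Rightarrow> nat) set \<Rightarrow> ('d \<Rightarrow> nat) set" where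
  "maximal_gaps S = {h \<in> gaps S. \<forall>h'\<in>gaps S. h \<le> h' \<longrightarrow> h' = h}"

definition Frobenius_GNS :: "('d::finite \<Rightarrow> nat) set \<Rightarrow> ('d \<Rightarrow> nat) \<Rightarrow> bool" where
  "Frobenius_GNS S F \<longleftrightarrow> GNS S \<and> maximal_gaps S = {F}"

definition pseudo_frobenius :: "('d::finite \<Rightarrow> nat) set \<Rightarrow> ('d \<Rightarrow> nat) set" where
  "pseudo_frobenius S = {P \<in> gaps S. \<forall>s\<in>S. s \<noteq> 0 \<longrightarrow> P + s \<in> S}"

definition type_GNS :: "('d::finite \<Rightarrow> nat) set \<Rightarrow> nat" where
  "type_GNS S = card (pseudo_frobenius S)"

definition box_norm :: "('d::finite \<Rightarrow> nat) \<Rightarrow> nat" where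
  "box_norm F = (\<Prod>i\<in>UNIV. F i + 1)"

end

theory Submission
  imports Defs "HOL-Library.FuncSet"
begin

lemma gaps_le_F:
  fixes S :: "('d::finite \<Rightarrow> nat) set"
  assumes "Frobenius_GNS S F" "h \<in> gaps S"
  shows "h \<le> F"
proof -
  have fin: "finite (gaps S)" using assms(1) by (simp add: Frobenius_GNS_def GNS_def gaps_def)
  obtain m where m: "m \<in> gaps S" "h \<le> m" "\<forall>b\<in>gaps S. m \<le> b \<longrightarrow> m = b"
    using finite_has_maximal2[OF fin assms(2)] by blast
  have "m \<in> maximal_gaps S" using m by (auto simp: maximal_gaps_def)
  then have "m = F" using assms(1) by (simp add: Frobenius_GNS_def)
  then show ?thesis using m by simp
qed

lemma exists_PF:
  fixes S :: "('d::finite \<Rightarrow> nat) set"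
  assumes "GNS S" "h \<in> gaps S"
  shows "\<exists>P s. P \<in> pseudo_frobenius S \<and> s \<in> S \<and> P = h + s"
proof -
  define A where "A = {x \<in> gaps S. \<exists>s\<in>S. x = h + s}"
  have "finite (gaps S)" using assms(1) by (simp add: GNS_def gaps_def)
  moreover have "A \<subseteq> gaps S" by (auto simp: A_def)
  ultimately have fin: "finite A" by (rule finite_subset[rotated])
  have hA: "h \<in> A" using assms by (auto simp: A_def GNS_def intro!: bexI[of _ 0])
  obtain m where m: "m \<in> A" "h \<le> m" "\<forall>b\<in>A. m \<le> b \<longrightarrow> m = b"
    using finite_has_maximal2[OF fin hA] by blast
  obtain s where s: "s \<in> S" "m = h + s" using m(1) by (auto simp: A_def)
  have "m \<in> pseudo_frobenius S"
    unfolding pseudo_frobenius_def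
  proof (intro CollectI conjI ballI impI)
    show "m \<in> gaps S" using m(1) by (simp add: A_def)
    fix s' assume s': "s' \<in> S" "s' \<noteq> 0"
    show "m + s' \<in> S"
    proof (rule ccontr)
      assume "m + s' \<notin> S"
      moreover have "s + s' \<in> S" using assms(1) s s' by (simp add: GNS_def)
      ultimately have "m + s' \<in> A" using s by (auto simp: A_def gaps_def add.assoc)
      moreover have "m \<le> m + s'" by (simp add: le_fun_def)
      ultimately have "m + s' = m" using m(3) by auto
      then have "s' = 0" by (auto simp: fun_eq_iff)
      then show False using s' by simp
    qed
  qed
  then show ?thesis using s by blast
qed

lemma box_card:
  fixes F :: "'d::finite \<Rightarrow> nat"
  shows "card {x. x \<le> F} = box_norm F"
proof -
  have "{x. x \<le> F} = PiE UNIV (\<lambda>i. {..F i})"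
    by (auto simp: le_fun_def PiE_UNIV_domain)
  then show ?thesis by (simp add: card_PiE box_norm_def)
qed

theorem theorem4p2:
  fixes S :: "('d::finite \<Rightarrow> nat) set" and F :: "'d \<Rightarrow> nat"
  assumes "Frobenius_GNS S F"
  shows "real (genus S) / (real (box_norm F) - real (genus S)) \<le> real (type_GNS S)"
proof -
  have G: "GNS S" using assms by (simp add: Frobenius_GNS_def)
  define N where "N = S \<inter> {x. x \<le> F}"
  have finbox: "finite {x. x \<le> F}"
  proof -
    have "{x. x \<le> F} = PiE UNIV (\<lambda>i. {..F i})"
      by (auto simp: le_fun_def PiE_UNIV_domain)
    then show ?thesis by (simp add: finite_PiE)
  qed
  have finG: "finite (gaps S)" using G by (simp add: GNS_def gaps_def)
  have gsub: "gaps S \<subseteq> {x. x \<le> F}" using gaps_le_F[OF assms] by blast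
  have split: "{x. x \<le> F} = gaps S \<union> N" using gsub by (auto simp: N_def gaps_def)
  have disj: "gaps S \<inter> N = {}" by (auto simp: N_def gaps_def)
  have finN: "finite N" using finbox by (simp add: N_def)
  have cardeq: "box_norm F = genus S + card N"
    using box_card[of F] split disj finG finN by (simp add: genus_def card_Un_disjoint)
  have "0 \<in> N" using G by (simp add: N_def GNS_def le_fun_def)
  then have Npos: "card N > 0" using finN by (auto simp: card_gt_0_iff)
  have finPF: "finite (pseudo_frobenius S)"
    using finG by (rule finite_subset[rotated]) (auto simp: pseudo_frobenius_def)
  define P where "P h = (SOME P. P \<in> pseudo_frobenius S \<and> (\<exists>s\<in>S. P = h + s))" for h
  have Ph: "P h \<in> pseudo_frobenius S \<and> (\<exists>s\<in>S. P h = h + s)" if "h \<in> gaps S" for h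
  proof -
    have "\<exists>P. P \<in> pseudo_frobenius S \<and> (\<exists>s\<in>S. P = h + s)" using exists_PF[OF G that] by blast
    then show ?thesis unfolding P_def by (rule someI_ex)
  qed
  define f where "f h = (P h, P h - h)" for h
  have inj: "inj_on f (gaps S)"
  proof (rule inj_onI)
    fix a b assume a: "a \<in> gaps S" and b: "b \<in> gaps S" and e: "f a = f b"
    obtain sa where sa: "P a = a + sa" using Ph[OF a] by blast
    obtain sb where sb: "P b = b + sb" using Ph[OF b] by blast
    have "P a = P b" "P a - a = P b - b" using e by (auto simp: f_def)
    then show "a = b" using sa sb by (auto simp: fun_eq_iff)
  qed
  have img: "f ` gaps S \<subseteq> pseudo_frobenius S \<times> N"
  proof
    fix y assume "y \<in> f ` gaps S"
    then obtain h where h: "h \<in> gaps S" "y = f h" by blast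
    obtain s where s: "s \<in> S" "P h = h + s" using Ph[OF h(1)] by blast
    have PF: "P h \<in> pseudo_frobenius S" using Ph[OF h(1)] by blast
    have "P h \<in> gaps S" using PF by (simp add: pseudo_frobenius_def)
    then have "P h \<le> F" using gaps_le_F[OF assms] by blast
    moreover have "P h - h = s" using s(2) by (simp add: fun_eq_iff)
    moreover have "s \<le> P h" using s(2) by (simp add: le_fun_def)
    ultimately have "P h - h \<in> N" using s(1) by (auto simp: N_def)
    then show "y \<in> pseudo_frobenius S \<times> N" using h PF by (simp add: f_def)
  qed
  have "genus S \<le> card (pseudo_frobenius S \<times> N)"
    unfolding genus_def using card_inj_on_le[OF inj img] finPF finN by simp
  then have le: "genus S \<le> type_GNS S * card N" by (simp add: card_cartesian_product type_GNS_def)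
  have "real (box_norm F) - real (genus S) = real (card N)" using cardeq by simp
  moreover have "real (genus S) \<le> real (type_GNS S) * real (card N)"
    using le by (metis of_nat_le_iff of_nat_mult)
  ultimately show ?thesis using Npos by (simp add: divide_le_eq)
qed

end
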